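(* Let $R \subseteq S$ be an extension of commutative rings such that $S$ is generated as an $R$-module by $1, f_1, \ldots, f_n$ ($n>0$, $f_i\in S$), and suppose $S$ has an exact presentation $R^{\oplus q} \xrightarrow{\mathbb M} R^{\oplus(n+1)} \xrightarrow{\varepsilon} S \to 0$ with $q>0$ and $\varepsilon = [1\ f_1\ \cdots\ f_n]$. If $f_if_j \in R$ for all $1 \le i,j\le n$, then $R$ is strictly closed in $S$.
   Context: For an extension of commutative rings $R \subseteq S$, the strict closure of $R$ in $S$ is $R^* = \{\alpha \in S \mid \alpha\otimes 1 = 1\otimes \alpha \text{ in } S\otimes_R S\}$; $R$ is strictly closed in $S$ if $R=R^*$. *)

theory Defs
  imports Main
begin

text \<open>An extension of commutative rings R \<subseteq> S: S is the ambient type (a comm_ring_1),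
  R a subring given as a subset.\<close>
definition subring :: "'a::comm_ring_1 set \<Rightarrow> bool" where
  "subring R \<longleftrightarrow> 0 \<in> R \<and> 1 \<in> R \<and> (\<forall>x\<in>R. \<forall>y\<in>R. x + y \<in> R \<and> x * y \<in> R) \<and> (\<forall>x\<in>R. - x \<in> R)"

text \<open>Tensor product S \<otimes>_R S, constructed as the free abelian group on S \<times> S
  (finitely supported integer-valued functions) modulo the subgroup generated by the
  R-bilinearity relations.\<close>
definition tdelta :: "'a \<Rightarrow> 'a \<Rightarrow> ('a \<times> 'a \<Rightarrow> int)" where
  "tdelta s t = (\<lambda>p. if p = (s, t) then 1 else 0)"

definition tensor_gens :: "'a::comm_ring_1 set \<Rightarrow> ('a \<times> 'a \<Rightarrow> int) set" where
  "tensor_gens R =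
     {\<lambda>p. tdelta (s + s') t p - tdelta s t p - tdelta s' t p | s s' t. True}
   \<union> {\<lambda>p. tdelta s (t + t') p - tdelta s t p - tdelta s t' p | s t t'. True}
   \<union> {\<lambda>p. tdelta (r * s) t p - tdelta s (r * t) p | r s t. r \<in> R}"

inductive_set tensor_relations :: "'a::comm_ring_1 set \<Rightarrow> ('a \<times> 'a \<Rightarrow> int) set"
  for R :: "'a set" where
  zero: "(\<lambda>p. 0) \<in> tensor_relations R"
| gen: "g \<in> tensor_gens R \<Longrightarrow> g \<in> tensor_relations R"
| add: "x \<in> tensor_relations R \<Longrightarrow> y \<in> tensor_relations R \<Longrightarrow> (\<lambda>p. x p + y p) \<in> tensor_relations R"
| neg: "x \<in> tensor_relations R \<Longrightarrow> (\<lambda>p. - x p) \<in> tensor_relations R"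

definition tensor_eq :: "'a::comm_ring_1 set \<Rightarrow> 'a \<Rightarrow> 'a \<Rightarrow> 'a \<Rightarrow> 'a \<Rightarrow> bool" where
  "tensor_eq R s t s' t' \<longleftrightarrow> (\<lambda>p. tdelta s t p - tdelta s' t' p) \<in> tensor_relations R"

definition strict_closure :: "'a::comm_ring_1 set \<Rightarrow> 'a set" where
  "strict_closure R = {\<alpha>. tensor_eq R \<alpha> 1 1 \<alpha>}"

definition strictly_closed :: "'a::comm_ring_1 set \<Rightarrow> bool" where
  "strictly_closed R \<longleftrightarrow> strict_closure R = R"

end

theory Submission
  imports Defs
begin

definition supp0 :: "('b \<Rightarrow> int) \<Rightarrow> 'b set" where "supp0 x = {p. x p \<noteq> 0}"
definition Lsum :: "('b \<Rightarrow> 'a::comm_ring_1) \<Rightarrow> ('b \<Rightarrow> int) \<Rightarrow> 'a" where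
  "Lsum B x = (\<Sum>p\<in>supp0 x. of_int (x p) * B p)"

lemma Lsum_sup:
  assumes "finite A" "supp0 x \<subseteq> A"
  shows "Lsum B x = (\<Sum>p\<in>A. of_int (x p) * B p)"
  unfolding Lsum_def
  by (rule sum.mono_neutral_left) (use assms in \<open>auto simp: supp0_def intro: finite_subset\<close>)

lemma Lsum_add:
  assumes "finite (supp0 x)" "finite (supp0 y)"
  shows "finite (supp0 (\<lambda>p. x p + y p))" "Lsum B (\<lambda>p. x p + y p) = Lsum B x + Lsum B y"
proof -
  have s: "supp0 (\<lambda>p. x p + y p) \<subseteq> supp0 x \<union> supp0 y" by (auto simp: supp0_def)
  show "finite (supp0 (\<lambda>p. x p + y p))" using s assms finite_subset by blast
  have "Lsum B (\<lambda>p. x p + y p) = (\<Sum>p\<in>supp0 x \<union> supp0 y. of_int (x p + y p) * B p)"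
    by (rule Lsum_sup) (use s assms in auto)
  also have "\<dots> = (\<Sum>p\<in>supp0 x \<union> supp0 y. of_int (x p) * B p) + (\<Sum>p\<in>supp0 x \<union> supp0 y. of_int (y p) * B p)"
    by (simp add: distrib_right sum.distrib)
  also have "\<dots> = Lsum B x + Lsum B y"
    using Lsum_sup[of "supp0 x \<union> supp0 y" x B] Lsum_sup[of "supp0 x \<union> supp0 y" y B] assms by simp
  finally show "Lsum B (\<lambda>p. x p + y p) = Lsum B x + Lsum B y" .
qed

lemma Lsum_neg:
  shows "supp0 (\<lambda>p. - x p) = supp0 x" "Lsum B (\<lambda>p. - x p) = - Lsum B x"
  by (auto simp: supp0_def Lsum_def sum_negf)

lemma Lsum_diff:
  assumes "finite (supp0 x)" "finite (supp0 y)"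
  shows "finite (supp0 (\<lambda>p. x p - y p))" "Lsum B (\<lambda>p. x p - y p) = Lsum B x - Lsum B y"
proof -
  have e: "(\<lambda>p. x p - y p) = (\<lambda>p. x p + (\<lambda>p. - y p) p)" by auto
  have f: "finite (supp0 (\<lambda>p. - y p))" using assms Lsum_neg(1) by metis
  show "finite (supp0 (\<lambda>p. x p - y p))" unfolding e using Lsum_add(1)[OF assms(1) f] .
  have "Lsum B (\<lambda>p. x p + (\<lambda>p. - y p) p) = Lsum B x + Lsum B (\<lambda>p. - y p)"
    by (rule Lsum_add(2)[OF assms(1) f])
  also have "Lsum B (\<lambda>p. - y p) = - Lsum B y" by (rule Lsum_neg(2))
  finally show "Lsum B (\<lambda>p. x p - y p) = Lsum B x - Lsum B y" unfolding e by simp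
qed

lemma tdelta_supp: "supp0 (tdelta a b) = {(a,b)}"
  by (auto simp: supp0_def tdelta_def)

lemma tdelta_fin: "finite (supp0 (tdelta a b))"
  by (simp add: tdelta_supp)

lemma Lsum_tdelta: "Lsum B (tdelta a b) = B (a,b)"
  unfolding Lsum_def tdelta_supp by (simp add: tdelta_def)

lemma subring_sum:
  assumes "subring R" "\<And>i. i \<in> A \<Longrightarrow> g i \<in> R"
  shows "sum g A \<in> R"
  using assms(2)
proof (induction A rule: infinite_finite_induct)
  case (infinite A) then show ?case using assms(1) by (simp add: subring_def)
next
  case empty then show ?case using assms(1) by (simp add: subring_def)
next
  case (insert x F) then show ?case using assms(1) by (simp add: subring_def)
qed

theorem corollary2p7:
  fixes R :: "'a::comm_ring_1 set" and f :: "nat \<Rightarrow> 'a" and n q :: nat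
    and M :: "nat \<Rightarrow> nat \<Rightarrow> 'a"
  assumes sub: "subring R"
    and npos: "n > 0" and qpos: "q > 0"
    and gen: "\<forall>s. \<exists>c. (\<forall>i\<le>n. c i \<in> R) \<and> s = c 0 + (\<Sum>i=1..n. c i * f i)"
    and M_R: "\<forall>i\<le>n. \<forall>j<q. M i j \<in> R"
    and exact: "\<forall>c. (\<forall>i\<le>n. c i \<in> R) \<longrightarrow>
                 ((c 0 + (\<Sum>i=1..n. c i * f i) = 0) \<longleftrightarrow>
                  (\<exists>x. (\<forall>j<q. x j \<in> R) \<and> (\<forall>i\<le>n. c i = (\<Sum>j<q. M i j * x j))))"
    and prods: "\<forall>i\<in>{1..n}. \<forall>j\<in>{1..n}. f i * f j \<in> R"
  shows "strictly_closed R"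
proof -
  have R0: "0 \<in> R" and R1: "1 \<in> R" and Radd: "\<And>x y. x \<in> R \<Longrightarrow> y \<in> R \<Longrightarrow> x + y \<in> R"
    and Rmul: "\<And>x y. x \<in> R \<Longrightarrow> y \<in> R \<Longrightarrow> x * y \<in> R" and Rneg: "\<And>x. x \<in> R \<Longrightarrow> - x \<in> R"
    using sub by (auto simp: subring_def)
  have Rdiff: "\<And>x y. x \<in> R \<Longrightarrow> y \<in> R \<Longrightarrow> x - y \<in> R"
    using Radd Rneg by (metis diff_conv_add_uminus)
  define rep where "rep c t \<longleftrightarrow> (\<forall>i\<le>n. c i \<in> R) \<and> t = c 0 + (\<Sum>i=1..n. c i * f i)" for c t
  define cf where "cf t = (SOME c. rep c t)" for t
  have cf: "rep (cf t) t" for t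
  proof -
    have "\<exists>c. rep c t" using gen unfolding rep_def by blast
    then show ?thesis unfolding cf_def by (rule someI_ex)
  qed
  define inK where "inK y \<longleftrightarrow> (\<exists>z. y = (\<Sum>j<q. M 0 j * z j))" for y
  have K0: "inK 0" unfolding inK_def by (rule exI[of _ "\<lambda>_. 0"]) simp
  have Kadd: "inK (a + b)" if "inK a" "inK b" for a b
  proof -
    obtain z z' where "a = (\<Sum>j<q. M 0 j * z j)" "b = (\<Sum>j<q. M 0 j * z' j)" using \<open>inK a\<close> \<open>inK b\<close> unfolding inK_def by auto
    then have "a + b = (\<Sum>j<q. M 0 j * (z j + z' j))" by (simp add: distrib_left sum.distrib)
    then show ?thesis unfolding inK_def by (intro exI[where x="\<lambda>j. z j + z' j"])
  qed
  have Kmul: "inK (s * a)" if "inK a" for a s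
  proof -
    obtain z where "a = (\<Sum>j<q. M 0 j * z j)" using \<open>inK a\<close> unfolding inK_def by auto
    then have "s * a = (\<Sum>j<q. M 0 j * (s * z j))" by (simp add: sum_distrib_left algebra_simps)
    then show ?thesis unfolding inK_def by (intro exI[where x="\<lambda>j. s * z j"])
  qed
  have Kneg: "inK (- a)" if "inK a" for a
    using Kmul[OF that, of "-1"] by simp
  have Kdiff: "inK (a - b)" if "inK a" "inK b" for a b
    using Kadd[OF that(1) Kneg[OF that(2)]] by simp
  have wd: "inK (c 0 - d 0)" if "rep c t" "rep d t" for c d t
  proof -
    let ?e = "\<lambda>i. c i - d i"
    have eR: "\<forall>i\<le>n. ?e i \<in> R" using that Rdiff unfolding rep_def by auto
    have e0: "?e 0 + (\<Sum>i=1..n. ?e i * f i) = 0"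
    proof -
      have "c 0 + (\<Sum>i=1..n. c i * f i) = d 0 + (\<Sum>i=1..n. d i * f i)" using that unfolding rep_def by simp
      moreover have "?e 0 + (\<Sum>i=1..n. ?e i * f i) = (c 0 + (\<Sum>i=1..n. c i * f i)) - (d 0 + (\<Sum>i=1..n. d i * f i))"
        by (simp add: left_diff_distrib sum_subtractf)
      ultimately show ?thesis by simp
    qed
    have "\<exists>x. (\<forall>j<q. x j \<in> R) \<and> (\<forall>i\<le>n. ?e i = (\<Sum>j<q. M i j * x j))"
      using exact[THEN spec[where x="\<lambda>i. c i - d i"]] eR e0 by simp
    then obtain x where "\<forall>i\<le>n. ?e i = (\<Sum>j<q. M i j * x j)" by blast
    then show ?thesis unfolding inK_def by auto
  qed
  \<comment> \<open>K is contained in R\<close>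
  have col: "M 0 j + (\<Sum>i=1..n. M i j * f i) = 0" if "j < q" for j
  proof -
    define x where "x = (\<lambda>j'::nat. if j' = j then (1::'a) else 0)"
    have cR: "\<forall>i\<le>n. M i j \<in> R" using M_R that by auto
    have xR: "\<forall>j'<q. x j' \<in> R" using R0 R1 by (auto simp: x_def)
    have s: "M i j = (\<Sum>j'<q. M i j' * x j')" for i
    proof -
      have "(\<Sum>j'<q. M i j' * x j') = (\<Sum>j'\<in>{..<q}. if j' = j then M i j else 0)"
        by (rule sum.cong) (auto simp: x_def)
      also have "\<dots> = M i j" using that by (simp add: sum.delta')
      finally show ?thesis by simp
    qed
    have ex: "\<exists>x. (\<forall>j<q. x j \<in> R) \<and> (\<forall>i\<le>n. M i j = (\<Sum>j<q. M i j * x j))"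
      using xR s by blast
    have "(\<forall>i\<le>n. M i j \<in> R) \<longrightarrow> ((M 0 j + (\<Sum>i=1..n. M i j * f i) = 0) \<longleftrightarrow>
                  (\<exists>x. (\<forall>j'<q. x j' \<in> R) \<and> (\<forall>i\<le>n. M i j = (\<Sum>j'<q. M i j' * x j'))))"
      using exact by (rule allE)
    with cR ex show ?thesis by blast
  qed
  have Mf: "M 0 j * f k \<in> R" if "j < q" "k \<in> {1..n}" for j k
  proof -
    have "M 0 j = - (\<Sum>i=1..n. M i j * f i)"
      using col[OF that(1)] by (simp add: eq_neg_iff_add_eq_0)
    then have "M 0 j * f k = - (\<Sum>i=1..n. M i j * f i * f k)"
      by (simp add: sum_distrib_right)
    then have "M 0 j * f k = - (\<Sum>i=1..n. M i j * (f i * f k))"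
      by (simp add: mult.assoc)
    moreover have "(\<Sum>i=1..n. M i j * (f i * f k)) \<in> R"
      by (rule subring_sum[OF sub], rule Rmul) (use M_R prods that in auto)
    ultimately show ?thesis using Rneg by simp
  qed
  have Ms: "M 0 j * s \<in> R" if "j < q" for j s
  proof -
    have r: "rep (cf s) s" by (rule cf)
    have e: "s = cf s 0 + (\<Sum>i=1..n. cf s i * f i)" using r unfolding rep_def by blast
    have "M 0 j * s = M 0 j * (cf s 0 + (\<Sum>i=1..n. cf s i * f i))"
      using e by (rule arg_cong)
    also have "\<dots> = M 0 j * cf s 0 + (\<Sum>i=1..n. cf s i * (M 0 j * f i))"
      by (simp add: distrib_left sum_distrib_left mult.left_commute)
    finally have "M 0 j * s = M 0 j * cf s 0 + (\<Sum>i=1..n. cf s i * (M 0 j * f i))" .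
    moreover have "M 0 j * cf s 0 \<in> R" using r M_R that Rmul unfolding rep_def by auto
    moreover have "(\<Sum>i=1..n. cf s i * (M 0 j * f i)) \<in> R"
      by (rule subring_sum[OF sub], rule Rmul) (use r Mf that in \<open>auto simp: rep_def\<close>)
    ultimately show ?thesis using Radd by simp
  qed
  have KR: "y \<in> R" if "inK y" for y
    using that Ms unfolding inK_def by (auto intro!: subring_sum[OF sub])
  define pi where "pi t = cf t 0" for t
  define B where "B p = fst p * pi (snd p)" for p
  have piadd: "inK (pi (t + t') - pi t - pi t')" for t t'
  proof -
    have e1: "t = cf t 0 + (\<Sum>i=1..n. cf t i * f i)" using cf[of t] unfolding rep_def by blast
    have e2: "t' = cf t' 0 + (\<Sum>i=1..n. cf t' i * f i)" using cf[of t'] unfolding rep_def by blast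
    have "t + t' = (cf t 0 + (\<Sum>i=1..n. cf t i * f i)) + (cf t' 0 + (\<Sum>i=1..n. cf t' i * f i))"
      using e1 e2 by (rule arg_cong2[where f="(+)"])
    also have "\<dots> = (cf t 0 + cf t' 0) + (\<Sum>i=1..n. (cf t i + cf t' i) * f i)"
      by (simp add: distrib_right sum.distrib add_ac)
    finally have "rep (\<lambda>i. cf t i + cf t' i) (t + t')"
      using cf[of t] cf[of t'] Radd unfolding rep_def by auto
    from wd[OF cf[of "t+t'"] this] show ?thesis unfolding pi_def by (simp add: algebra_simps)
  qed
  have pimul: "inK (r * pi t - pi (r * t))" if "r \<in> R" for r t
  proof -
    have e1: "t = cf t 0 + (\<Sum>i=1..n. cf t i * f i)" using cf[of t] unfolding rep_def by blast
    have "r * t = r * (cf t 0 + (\<Sum>i=1..n. cf t i * f i))"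
      using e1 by (rule arg_cong)
    also have "\<dots> = r * cf t 0 + (\<Sum>i=1..n. (r * cf t i) * f i)"
      by (simp add: distrib_left sum_distrib_left mult.assoc)
    finally have "rep (\<lambda>i. r * cf t i) (r * t)"
      using cf[of t] Rmul that unfolding rep_def by auto
    from wd[OF this cf[of "r*t"]] show ?thesis unfolding pi_def by simp
  qed
  have pi1: "inK (pi 1 - 1)"
  proof -
    have "rep (\<lambda>i. if i = 0 then 1 else 0) 1"
      using R0 R1 unfolding rep_def by auto
    from wd[OF cf[of 1] this] show ?thesis unfolding pi_def by simp
  qed
  have main: "finite (supp0 x) \<and> inK (Lsum B x)" if "x \<in> tensor_relations R" for x
    using that
  proof (induction rule: tensor_relations.induct)
    case zero
    then show ?case using K0 by (simp add: supp0_def Lsum_def)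
  next
    case (gen g)
    have ga: "finite (supp0 (\<lambda>p. tdelta (s + s') t p - tdelta s t p - tdelta s' t p)) \<and>
              inK (Lsum B (\<lambda>p. tdelta (s + s') t p - tdelta s t p - tdelta s' t p))" for s s' t
    proof -
      have f1: "finite (supp0 (\<lambda>p. tdelta (s + s') t p - tdelta s t p))"
        by (rule Lsum_diff(1)[OF tdelta_fin tdelta_fin])
      have "Lsum B (\<lambda>p. tdelta (s + s') t p - tdelta s t p - tdelta s' t p) = B (s+s', t) - B (s,t) - B (s',t)"
        by (simp only: Lsum_diff(2)[OF f1 tdelta_fin] Lsum_diff(2)[OF tdelta_fin tdelta_fin] Lsum_tdelta)
      also have "\<dots> = 0" by (simp add: B_def distrib_right)
      finally show ?thesis using K0 Lsum_diff(1)[OF f1 tdelta_fin] by simp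
    qed
    have gb: "finite (supp0 (\<lambda>p. tdelta s (t + t') p - tdelta s t p - tdelta s t' p)) \<and>
              inK (Lsum B (\<lambda>p. tdelta s (t + t') p - tdelta s t p - tdelta s t' p))" for s t t'
    proof -
      have f1: "finite (supp0 (\<lambda>p. tdelta s (t + t') p - tdelta s t p))"
        by (rule Lsum_diff(1)[OF tdelta_fin tdelta_fin])
      have "Lsum B (\<lambda>p. tdelta s (t + t') p - tdelta s t p - tdelta s t' p) = B (s, t+t') - B (s,t) - B (s,t')"
        by (simp only: Lsum_diff(2)[OF f1 tdelta_fin] Lsum_diff(2)[OF tdelta_fin tdelta_fin] Lsum_tdelta)
      also have "\<dots> = s * (pi (t + t') - pi t - pi t')" by (simp add: B_def right_diff_distrib)
      finally show ?thesis using Kmul[OF piadd] Lsum_diff(1)[OF f1 tdelta_fin] by simp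
    qed
    have gc: "finite (supp0 (\<lambda>p. tdelta (r * s) t p - tdelta s (r * t) p)) \<and>
              inK (Lsum B (\<lambda>p. tdelta (r * s) t p - tdelta s (r * t) p))" if "r \<in> R" for r s t
    proof -
      have "Lsum B (\<lambda>p. tdelta (r * s) t p - tdelta s (r * t) p) = B (r*s, t) - B (s, r*t)"
        by (simp only: Lsum_diff(2)[OF tdelta_fin tdelta_fin] Lsum_tdelta)
      also have "\<dots> = s * (r * pi t - pi (r * t))" by (simp add: B_def right_diff_distrib mult_ac)
      finally show ?thesis using Kmul[OF pimul[OF that]] Lsum_diff(1)[OF tdelta_fin tdelta_fin] by simp
    qed
    from gen.hyps show ?case
      unfolding tensor_gens_def
      by (elim UnE CollectE exE conjE; simp only: ga gb gc)
  next
    case (add x y)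
    then have h: "finite (supp0 x)" "finite (supp0 y)" "inK (Lsum B x)" "inK (Lsum B y)" by auto
    show ?case using Lsum_add(1)[OF h(1,2)] Lsum_add(2)[OF h(1,2), where B=B] Kadd[OF h(3,4)] by simp
  next
    case (neg x)
    then show ?case using Lsum_neg(1)[where x=x] Lsum_neg(2)[where x=x and B=B] Kneg by auto
  qed
  show ?thesis unfolding strictly_closed_def strict_closure_def
  proof (intro equalityI subsetI)
    fix a assume "a \<in> {\<alpha>. tensor_eq R \<alpha> 1 1 \<alpha>}"
    then have "(\<lambda>p. tdelta a 1 p - tdelta 1 a p) \<in> tensor_relations R"
      by (simp add: tensor_eq_def)
    from main[OF this] have "inK (B (a,1) - B (1,a))"
      by (simp add: Lsum_diff[OF tdelta_fin tdelta_fin] Lsum_tdelta)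
    then have "inK (a * pi 1 - pi a)" by (simp add: B_def)
    from Kdiff[OF this Kmul[OF pi1, of a]] have "inK (a - pi a)"
      by (simp add: algebra_simps)
    then have "a - pi a \<in> R" by (rule KR)
    moreover have "pi a \<in> R" using cf[of a] unfolding pi_def rep_def by auto
    ultimately show "a \<in> R" using Radd by (metis diff_add_cancel)
  next
    fix a assume a: "a \<in> R"
    have "(\<lambda>p. tdelta (a * 1) 1 p - tdelta 1 (a * 1) p) \<in> tensor_gens R"
      unfolding tensor_gens_def using a by blast
    then show "a \<in> {\<alpha>. tensor_eq R \<alpha> 1 1 \<alpha>}"
      by (simp add: tensor_eq_def tensor_relations.gen)
  qed
qed

end
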